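(* Let $(\mathcal G,\lambda)$ be a small morphism-colored groupoid satisfying the inverse-compatibility condition. For $f,g\in\mathrm{Mor}(\mathcal G)$ with $(s_0\circ\lambda_0)(\mathrm{source}(f))=(s_0\circ\lambda_0)(\mathrm{target}(g))$, there exists a composable pair $(f',g')$ of morphisms of $\mathcal G$ (i.e. $\mathrm{source}(f')=\mathrm{target}(g')$) such that $(s_1\circ\lambda_1)(f)=(s_1\circ\lambda_1)(f')$ and $(s_1\circ\lambda_1)(g)=(s_1\circ\lambda_1)(g')$.
   Context: A morphism-colored category is a pair $(\mathcal C,\lambda)$ where $\mathcal C$ is a category and $\lambda$ assigns to each morphism $f$ a color $\lambda(f)$, such that: whenever $g,f_1,f_2$ with $(f_1,f_2)$ composable satisfy $\lambda(g)=\lambda(f_1\circ f_2)$, there exist composable $g_1,g_2$ with $g=g_1\circ g_2$, $\lambda(g_1)=\lambda(f_1)$, $\lambda(g_2)=\lambda(f_2)$. It is a morphism-colored groupoid if $\mathcal C$ is a groupoid, and small if $\mathcal C$ is small and $\lambda$ is a map into a set. Inverse-compatibility: $\lambda(f)=\lambda(g)$ implies $\lambda(f^{-1})=\lambda(g^{-1})$. $I_1=\lambda(\mathrm{Mor}(\mathcal G))$, $\lambda_1$ the corestriction of $\lambda$ to $I_1$; $I_0=\{\lambda(\mathrm{id}_x):x\in\mathrm{Obj}(\mathcal G)\}$, $\lambda_0(x)=\lambda(\mathrm{id}_x)$. The equivalence relation $\overset{1}{\sim}$ on $I_1$: $\lambda(f_1\circ\cdots\circ f_l)\overset{1}{\sim}\lambda(g_1\circ\cdots\circ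 g_l)$ for every $l\ge1$ and all composable sequences with $\lambda(f_i)=\lambda(g_i)$ for all $i$ (no other pairs); $s_1:I_1\to\bar I_1$ the quotient map. The equivalence relation $\overset{0}{\sim}$ on $I_0$: $\lambda_0(\mathrm{source}(f))\overset{0}{\sim}\lambda_0(\mathrm{source}(g))$ whenever $(s_1\circ\lambda_1)(f)=(s_1\circ\lambda_1)(g)$; $s_0:I_0\to\bar I_0$ the quotient map onto its classes. *)

theory Defs
  imports Main
begin

text \<open>A small category given by explicit carrier sets. comp g f is g \<circ> f,
  defined (meaningfully) when dom g = cod f.\<close>
record ('o, 'm) cat =
  Obj   :: "'o set"
  Mor   :: "'m set"
  dom   :: "'m \<Rightarrow> 'o"
  cod   :: "'m \<Rightarrow> 'o"
  comp  :: "'m \<Rightarrow> 'm \<Rightarrow> 'm"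
  ident :: "'o \<Rightarrow> 'm"

definition category :: "('o, 'm) cat \<Rightarrow> bool" where
  "category C \<longleftrightarrow>
     (\<forall>f\<in>Mor C. dom C f \<in> Obj C \<and> cod C f \<in> Obj C) \<and>
     (\<forall>x\<in>Obj C. ident C x \<in> Mor C \<and> dom C (ident C x) = x \<and> cod C (ident C x) = x) \<and>
     (\<forall>f\<in>Mor C. \<forall>g\<in>Mor C. dom C g = cod C f \<longrightarrow>
        comp C g f \<in> Mor C \<and> dom C (comp C g f) = dom C f \<and> cod C (comp C g f) = cod C g) \<and>
     (\<forall>f\<in>Mor C. \<forall>g\<in>Mor C. \<forall>h\<in>Mor C. dom C h = cod C g \<longrightarrow> dom C g = cod C f \<longrightarrow>
        comp C h (comp C g f) = comp C (comp C h g) f) \<and>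
     (\<forall>f\<in>Mor C. comp C (ident C (cod C f)) f = f \<and> comp C f (ident C (dom C f)) = f)"

definition is_inverse :: "('o, 'm) cat \<Rightarrow> 'm \<Rightarrow> 'm \<Rightarrow> bool" where
  "is_inverse C f g \<longleftrightarrow> g \<in> Mor C \<and> dom C g = cod C f \<and> cod C g = dom C f \<and>
     comp C g f = ident C (dom C f) \<and> comp C f g = ident C (cod C f)"

definition groupoid :: "('o, 'm) cat \<Rightarrow> bool" where
  "groupoid C \<longleftrightarrow> category C \<and> (\<forall>f\<in>Mor C. \<exists>g. is_inverse C f g)"

definition ginv :: "('o, 'm) cat \<Rightarrow> 'm \<Rightarrow> 'm" where
  "ginv C f = (SOME g. is_inverse C f g)"

definition morphism_colored :: "('o, 'm) cat \<Rightarrow> ('m \<Rightarrow> 'c) \<Rightarrow> bool" where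
  "morphism_colored C lam \<longleftrightarrow> category C \<and>
     (\<forall>g\<in>Mor C. \<forall>f1\<in>Mor C. \<forall>f2\<in>Mor C. dom C f1 = cod C f2 \<longrightarrow> lam g = lam (comp C f1 f2) \<longrightarrow>
        (\<exists>g1\<in>Mor C. \<exists>g2\<in>Mor C. dom C g1 = cod C g2 \<and> g = comp C g1 g2 \<and>
            lam g1 = lam f1 \<and> lam g2 = lam f2))"

definition morphism_colored_groupoid :: "('o, 'm) cat \<Rightarrow> ('m \<Rightarrow> 'c) \<Rightarrow> bool" where
  "morphism_colored_groupoid C lam \<longleftrightarrow> morphism_colored C lam \<and> groupoid C"

definition inverse_compatible :: "('o, 'm) cat \<Rightarrow> ('m \<Rightarrow> 'c) \<Rightarrow> bool" where
  "inverse_compatible C lam \<longleftrightarrow>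
     (\<forall>f\<in>Mor C. \<forall>g\<in>Mor C. lam f = lam g \<longrightarrow> lam (ginv C f) = lam (ginv C g))"

definition comp_seq :: "('o, 'm) cat \<Rightarrow> 'm list \<Rightarrow> bool" where
  "comp_seq C fs \<longleftrightarrow> fs \<noteq> [] \<and> set fs \<subseteq> Mor C \<and>
     (\<forall>i. Suc i < length fs \<longrightarrow> dom C (fs ! i) = cod C (fs ! Suc i))"

fun clist :: "('o, 'm) cat \<Rightarrow> 'm list \<Rightarrow> 'm" where
  "clist C [] = undefined"
| "clist C [f] = f"
| "clist C (f # g # fs) = comp C f (clist C (g # fs))"

definition I1 :: "('o, 'm) cat \<Rightarrow> ('m \<Rightarrow> 'c) \<Rightarrow> 'c set" where
  "I1 C lam = lam ` Mor C"

definition I0 :: "('o, 'm) cat \<Rightarrow> ('m \<Rightarrow> 'c) \<Rightarrow> 'c set" where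
  "I0 C lam = (\<lambda>x. lam (ident C x)) ` Obj C"

definition rel1_base :: "('o, 'm) cat \<Rightarrow> ('m \<Rightarrow> 'c) \<Rightarrow> 'c rel" where
  "rel1_base C lam = {(lam (clist C fs), lam (clist C gs)) | fs gs.
     comp_seq C fs \<and> comp_seq C gs \<and> length fs = length gs \<and>
     (\<forall>i<length fs. lam (fs ! i) = lam (gs ! i))}"

definition sim1 :: "('o, 'm) cat \<Rightarrow> ('m \<Rightarrow> 'c) \<Rightarrow> 'c rel" where
  "sim1 C lam = ((rel1_base C lam \<union> (rel1_base C lam)\<inverse>)\<^sup>* ) \<inter> (I1 C lam \<times> I1 C lam)"

definition s1 :: "('o, 'm) cat \<Rightarrow> ('m \<Rightarrow> 'c) \<Rightarrow> 'c \<Rightarrow> 'c set" where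
  "s1 C lam c = sim1 C lam `` {c}"

definition rel0_base :: "('o, 'm) cat \<Rightarrow> ('m \<Rightarrow> 'c) \<Rightarrow> 'c rel" where
  "rel0_base C lam = {(lam (ident C (dom C f)), lam (ident C (dom C g))) | f g.
     f \<in> Mor C \<and> g \<in> Mor C \<and> s1 C lam (lam f) = s1 C lam (lam g)}"

definition sim0 :: "('o, 'm) cat \<Rightarrow> ('m \<Rightarrow> 'c) \<Rightarrow> 'c rel" where
  "sim0 C lam = ((rel0_base C lam \<union> (rel0_base C lam)\<inverse>)\<^sup>* ) \<inter> (I0 C lam \<times> I0 C lam)"

definition s0 :: "('o, 'm) cat \<Rightarrow> ('m \<Rightarrow> 'c) \<Rightarrow> 'c \<Rightarrow> 'c set" where
  "s0 C lam c = sim0 C lam `` {c}"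

definition lam0 :: "('o, 'm) cat \<Rightarrow> ('m \<Rightarrow> 'c) \<Rightarrow> 'o \<Rightarrow> 'c" where
  "lam0 C lam x = lam (ident C x)"

end

theory Submission
  imports Defs
begin

lemma cat_dc: "category C \<Longrightarrow> f \<in> Mor C \<Longrightarrow> dom C f \<in> Obj C \<and> cod C f \<in> Obj C"
  unfolding category_def by blast
lemma cat_id: "category C \<Longrightarrow> x \<in> Obj C \<Longrightarrow> ident C x \<in> Mor C \<and> dom C (ident C x) = x \<and> cod C (ident C x) = x"
  unfolding category_def by blast
lemma cat_comp: "category C \<Longrightarrow> f \<in> Mor C \<Longrightarrow> g \<in> Mor C \<Longrightarrow> dom C g = cod C f \<Longrightarrow>
        comp C g f \<in> Mor C \<and> dom C (comp C g f) = dom C f \<and> cod C (comp C g f) = cod C g"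
  unfolding category_def by blast
lemma cat_assoc: "category C \<Longrightarrow> f \<in> Mor C \<Longrightarrow> g \<in> Mor C \<Longrightarrow> h \<in> Mor C \<Longrightarrow> dom C h = cod C g \<Longrightarrow> dom C g = cod C f \<Longrightarrow>
        comp C h (comp C g f) = comp C (comp C h g) f"
  unfolding category_def by blast
lemma cat_unit: "category C \<Longrightarrow> f \<in> Mor C \<Longrightarrow> comp C (ident C (cod C f)) f = f \<and> comp C f (ident C (dom C f)) = f"
  unfolding category_def by blast

lemma inv_ok: "groupoid C \<Longrightarrow> f \<in> Mor C \<Longrightarrow> is_inverse C f (ginv C f)"
  unfolding groupoid_def ginv_def by (metis someI_ex)

lemma inv_unique:
  assumes c: "category C" and f: "f \<in> Mor C" and i1: "is_inverse C f g1" and i2: "is_inverse C f g2"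
  shows "g1 = g2"
proof -
  have g1: "g1 \<in> Mor C" "dom C g1 = cod C f" "comp C g1 f = ident C (dom C f)"
    using i1 unfolding is_inverse_def by blast+
  have g2: "g2 \<in> Mor C" "cod C g2 = dom C f" "comp C f g2 = ident C (cod C f)"
    using i2 unfolding is_inverse_def by blast+
  have u1: "comp C g1 (ident C (dom C g1)) = g1" using cat_unit[OF c g1(1)] by blast
  have u2: "comp C (ident C (cod C g2)) g2 = g2" using cat_unit[OF c g2(1)] by blast
  have a: "comp C g1 (comp C f g2) = comp C (comp C g1 f) g2"
    using cat_assoc[OF c g2(1) f g1(1) g1(2) g2(2)[symmetric]] .
  have "g1 = comp C g1 (ident C (cod C f))" using u1 g1(2) by argo
  also have "\<dots> = comp C g1 (comp C f g2)" using g2(3) by argo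
  also have "\<dots> = comp C (comp C g1 f) g2" using a .
  also have "\<dots> = comp C (ident C (dom C f)) g2" using g1(3) by argo
  also have "\<dots> = g2" using u2 g2(2) by argo
  finally show ?thesis .
qed

lemma ginv_ginv:
  assumes "groupoid C" "f \<in> Mor C" shows "ginv C (ginv C f) = f"
proof -
  have c: "category C" using assms(1) unfolding groupoid_def by blast
  have i: "is_inverse C f (ginv C f)" using inv_ok[OF assms] .
  hence gm: "ginv C f \<in> Mor C" unfolding is_inverse_def by blast
  have h: "dom C (ginv C f) = cod C f" "cod C (ginv C f) = dom C f"
     "comp C (ginv C f) f = ident C (dom C f)" "comp C f (ginv C f) = ident C (cod C f)"
    using i unfolding is_inverse_def by blast+
  have "is_inverse C (ginv C f) f" unfolding is_inverse_def
    using assms(2) h by argo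
  moreover have "is_inverse C (ginv C f) (ginv C (ginv C f))" using inv_ok[OF assms(1) gm] .
  ultimately have "f = ginv C (ginv C f)" by (rule inv_unique[OF c gm])
  thus ?thesis by (rule sym)
qed

lemma transport:
  assumes mc: "morphism_colored_groupoid C lam" and ic: "inverse_compatible C lam"
    and m: "m \<in> Mor C" and m': "m' \<in> Mor C" and eq: "lam m = lam m'"
    and g': "g' \<in> Mor C" "cod C g' = dom C m"
  shows "\<exists>g''\<in>Mor C. cod C g'' = dom C m' \<and> lam g'' = lam g'"
proof -
  have gp: "groupoid C" and c: "category C" and col: "morphism_colored C lam"
    using mc unfolding morphism_colored_groupoid_def groupoid_def by blast+
  define k where "k = ginv C g'"
  have ik: "is_inverse C g' k" using inv_ok[OF gp g'(1)] k_def by simp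
  hence k: "k \<in> Mor C" "dom C k = cod C g'" "cod C k = dom C g'" "comp C g' k = ident C (cod C g')"
    unfolding is_inverse_def by auto
  have mg: "comp C m g' \<in> Mor C" "dom C (comp C m g') = dom C g'"
    using cat_comp[OF c g'(1) m] g' by auto
  have "comp C (comp C m g') k = comp C m (comp C g' k)"
    using cat_assoc[OF c k(1) g'(1) m] g' k by simp
  also have "\<dots> = m" using k g' cat_unit[OF c m] by simp
  finally have le: "lam m' = lam (comp C (comp C m g') k)" using eq by simp
  have lift: "\<forall>g\<in>Mor C. \<forall>f1\<in>Mor C. \<forall>f2\<in>Mor C. dom C f1 = cod C f2 \<longrightarrow> lam g = lam (comp C f1 f2) \<longrightarrow>
        (\<exists>g1\<in>Mor C. \<exists>g2\<in>Mor C. dom C g1 = cod C g2 \<and> g = comp C g1 g2 \<and>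
            lam g1 = lam f1 \<and> lam g2 = lam f2)"
    using col unfolding morphism_colored_def by blast
  have "\<exists>g1\<in>Mor C. \<exists>g2\<in>Mor C. dom C g1 = cod C g2 \<and> m' = comp C g1 g2 \<and>
            lam g1 = lam (comp C m g') \<and> lam g2 = lam k"
    using lift[rule_format, OF m' mg(1) k(1) _ le] mg(2) k(3) by simp
  then obtain g1 g2 where gg: "g1 \<in> Mor C" "g2 \<in> Mor C" "dom C g1 = cod C g2"
     "m' = comp C g1 g2" "lam g2 = lam k" by blast
  have dg2: "dom C g2 = dom C m'" using gg cat_comp[OF c gg(2,1)] by simp
  have ig2: "is_inverse C g2 (ginv C g2)" using inv_ok[OF gp gg(2)] .
  have "lam (ginv C g2) = lam (ginv C k)"
    using ic[unfolded inverse_compatible_def, rule_format, OF gg(2) k(1) gg(5)] .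
  also have "ginv C k = g'" using ginv_ginv[OF gp g'(1)] k_def by simp
  finally have l: "lam (ginv C g2) = lam g'" .
  have "ginv C g2 \<in> Mor C" "cod C (ginv C g2) = dom C g2" using ig2 unfolding is_inverse_def by blast+
  thus ?thesis using l dg2 by metis
qed

lemma clist_props:
  "category C \<Longrightarrow> comp_seq C fs \<Longrightarrow> clist C fs \<in> Mor C \<and> dom C (clist C fs) = dom C (last fs)
     \<and> cod C (clist C fs) = cod C (hd fs)"
proof (induction C fs rule: clist.induct)
  case (1 C) then show ?case by (simp add: comp_seq_def)
next
  case (2 C f) then show ?case by (simp add: comp_seq_def)
next
  case (3 C f g fs)
  have h: "\<forall>i. Suc i < length (f#g#fs) \<longrightarrow> dom C ((f#g#fs)!i) = cod C ((f#g#fs)! Suc i)"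
    "set (f#g#fs) \<subseteq> Mor C" using "3.prems"(2) unfolding comp_seq_def by blast+
  have "dom C ((g#fs)!i) = cod C ((g#fs)!Suc i)" if "Suc i < length (g#fs)" for i
    using h(1)[rule_format, of "Suc i"] that by simp
  hence cs: "comp_seq C (g # fs)" using h(2) unfolding comp_seq_def by auto
  have d: "dom C f = cod C g" using "3.prems"(2) unfolding comp_seq_def by force
  have fm: "f \<in> Mor C" using "3.prems"(2) unfolding comp_seq_def by auto
  from "3.IH"[OF "3.prems"(1) cs] d fm cat_comp[OF "3.prems"(1), of "clist C (g # fs)" f] show ?case
    by auto
qed

lemma sym_star_induct:
  assumes "(a, b) \<in> (R \<union> R\<inverse>)\<^sup>*" "Q a"
    and "\<And>x y. (x, y) \<in> R \<Longrightarrow> Q x \<Longrightarrow> Q y" and "\<And>x y. (x, y) \<in> R \<Longrightarrow> Q y \<Longrightarrow> Q x"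
  shows "Q b"
  using assms(1,2) by (induction rule: rtrancl_induct) (use assms(3,4) in blast)+

lemma step_s1:
  assumes mc: "morphism_colored_groupoid C lam"
    and PT: "\<And>m m'. m \<in> Mor C \<Longrightarrow> m' \<in> Mor C \<Longrightarrow> lam m = lam m' \<Longrightarrow> P (dom C m) \<Longrightarrow> P (dom C m')"
    and a: "a \<in> Mor C" and b: "b \<in> Mor C" and s: "s1 C lam (lam a) = s1 C lam (lam b)"
    and pa: "P (dom C a)"
  shows "P (dom C b)"
proof -
  have c: "category C" using mc unfolding morphism_colored_groupoid_def groupoid_def by blast
  have "lam b \<in> s1 C lam (lam b)" using b unfolding s1_def sim1_def I1_def by auto
  hence "(lam a, lam b) \<in> sim1 C lam" using s unfolding s1_def by auto
  hence ch: "(lam a, lam b) \<in> (rel1_base C lam \<union> (rel1_base C lam)\<inverse>)\<^sup>*" unfolding sim1_def by auto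
  define Q where "Q c \<longleftrightarrow> (\<forall>m\<in>Mor C. lam m = c \<longrightarrow> P (dom C m))" for c
  have key: "Q y" if "Q x" "comp_seq C fs" "comp_seq C gs" "length fs = length gs"
    "\<forall>i<length fs. lam (fs ! i) = lam (gs ! i)" "x = lam (clist C fs)" "y = lam (clist C gs)" for x y fs gs
  proof -
    have f1: "clist C fs \<in> Mor C" "dom C (clist C fs) = dom C (last fs)" using clist_props[OF c that(2)] by auto
    have g1: "clist C gs \<in> Mor C" "dom C (clist C gs) = dom C (last gs)" using clist_props[OF c that(3)] by auto
    have ne: "fs \<noteq> []" "gs \<noteq> []" using that(2,3) unfolding comp_seq_def by auto
    have lf: "last fs \<in> Mor C" "last gs \<in> Mor C" using that(2,3) ne unfolding comp_seq_def by auto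
    have "lam (last fs) = lam (last gs)" using that(4,5) ne by (simp add: last_conv_nth)
    have "P (dom C (last fs))" using \<open>Q x\<close> f1 that(6) unfolding Q_def by metis
    hence "P (dom C (last gs))" using PT lf \<open>lam (last fs) = lam (last gs)\<close> by blast
    hence "P (dom C (clist C gs))" using g1 by simp
    thus ?thesis unfolding Q_def using PT g1 that(7) by metis
  qed
  have "Q (lam b)"
  proof (rule sym_star_induct[OF ch])
    show "Q (lam a)" unfolding Q_def using PT a pa by metis
    fix x y assume "(x, y) \<in> rel1_base C lam"
    then obtain fs gs where h: "comp_seq C fs" "comp_seq C gs" "length fs = length gs"
      "\<forall>i<length fs. lam (fs ! i) = lam (gs ! i)" "x = lam (clist C fs)" "y = lam (clist C gs)"
      unfolding rel1_base_def by blast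
    show "Q x \<Longrightarrow> Q y" using key h by blast
    show "Q y \<Longrightarrow> Q x" using key[of y gs fs x] h by auto
  qed
  thus ?thesis unfolding Q_def using b by blast
qed

theorem proposition3p10:
  fixes C :: "('o, 'm) cat" and lam :: "'m \<Rightarrow> 'c" and f g :: 'm
  assumes "morphism_colored_groupoid C lam"
    and "inverse_compatible C lam"
    and "f \<in> Mor C" and "g \<in> Mor C"
    and "s0 C lam (lam0 C lam (dom C f)) = s0 C lam (lam0 C lam (cod C g))"
  shows "\<exists>f'\<in>Mor C. \<exists>g'\<in>Mor C. dom C f' = cod C g' \<and>
           s1 C lam (lam f) = s1 C lam (lam f') \<and> s1 C lam (lam g) = s1 C lam (lam g')"
proof -
  have c: "category C" using assms(1) unfolding morphism_colored_groupoid_def groupoid_def by blast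
  define P where "P y \<longleftrightarrow> (\<exists>g'\<in>Mor C. cod C g' = y \<and> s1 C lam (lam g') = s1 C lam (lam g))" for y
  have PT: "P (dom C m')" if hh: "m \<in> Mor C" "m' \<in> Mor C" "lam m = lam m'" "P (dom C m)" for m m'
  proof -
    obtain g' where g': "g' \<in> Mor C" "cod C g' = dom C m" "s1 C lam (lam g') = s1 C lam (lam g)"
      using hh(4) unfolding P_def by blast
    obtain g'' where "g'' \<in> Mor C" "cod C g'' = dom C m'" "lam g'' = lam g'"
      using transport[OF assms(1,2) hh(1-3) g'(1,2)] by blast
    thus ?thesis unfolding P_def using g'(3) by metis
  qed
  have obj: "dom C f \<in> Obj C" "cod C g \<in> Obj C" using cat_dc[OF c] assms(3,4) by auto
  have "lam0 C lam (dom C f) \<in> s0 C lam (lam0 C lam (dom C f))"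
    using obj unfolding s0_def sim0_def I0_def lam0_def by auto
  hence "(lam0 C lam (cod C g), lam0 C lam (dom C f)) \<in> sim0 C lam" using assms(5) unfolding s0_def by auto
  hence ch: "(lam0 C lam (cod C g), lam0 C lam (dom C f)) \<in> (rel0_base C lam \<union> (rel0_base C lam)\<inverse>)\<^sup>*"
    unfolding sim0_def by auto
  define Q where "Q u \<longleftrightarrow> (\<forall>y\<in>Obj C. lam (ident C y) = u \<longrightarrow> P y)" for u
  have idm: "ident C y \<in> Mor C" "dom C (ident C y) = y" if "y \<in> Obj C" for y
    using cat_id[OF c that] by auto
  have key: "Q v" if "Q u" "a \<in> Mor C" "b \<in> Mor C" "s1 C lam (lam a) = s1 C lam (lam b)"
     "u = lam (ident C (dom C a))" "v = lam (ident C (dom C b))" for u v a b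
  proof -
    have o: "dom C a \<in> Obj C" "dom C b \<in> Obj C" using cat_dc[OF c] that(2,3) by auto
    have "P (dom C a)" using that(1,5) o unfolding Q_def by auto
    hence "P (dom C b)"
      apply (rule step_s1[where P=P and a=a and b=b, OF assms(1), rotated 4])
      using PT that(2-4) by blast+
    show ?thesis unfolding Q_def
    proof (intro ballI impI)
      fix y assume y: "y \<in> Obj C" "lam (ident C y) = v"
      have "P (dom C (ident C (dom C b)))" using idm o \<open>P (dom C b)\<close> by simp
      hence "P (dom C (ident C y))" using PT idm o y that(6) by metis
      thus "P y" using idm y by simp
    qed
  qed
  have "Q (lam0 C lam (dom C f))"
  proof (rule sym_star_induct[OF ch])
    show "Q (lam0 C lam (cod C g))" unfolding Q_def lam0_def
    proof (intro ballI impI)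
      fix y assume y: "y \<in> Obj C" "lam (ident C y) = lam (ident C (cod C g))"
      have "P (dom C (ident C (cod C g)))" using idm obj assms(4) unfolding P_def by auto
      hence "P (dom C (ident C y))" using PT idm obj y by metis
      thus "P y" using idm y by simp
    qed
    fix x y assume "(x, y) \<in> rel0_base C lam"
    then obtain a b where h: "a \<in> Mor C" "b \<in> Mor C" "s1 C lam (lam a) = s1 C lam (lam b)"
      "x = lam (ident C (dom C a))" "y = lam (ident C (dom C b))"
      unfolding rel0_base_def by blast
    show "Q x \<Longrightarrow> Q y" using key h by blast
    show "Q y \<Longrightarrow> Q x" using key[of y b a x] h by auto
  qed
  hence "P (dom C f)" using obj unfolding Q_def lam0_def by auto
  then obtain g' where "g' \<in> Mor C" "cod C g' = dom C f" "s1 C lam (lam g') = s1 C lam (lam g)"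
    unfolding P_def by blast
  thus ?thesis using assms(3) by metis
qed

end
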